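(* Let $\mathcal{H}$ be a complex separable Hilbert space with orthonormal basis $\{e_n\}_{n=1}^\infty$, and let $W \in \mathcal{B}(\mathcal{H})$ be the unilateral forward weighted shift $W e_n = w_n e_{n+1}$ with bounded weight sequence $(w_n)_n$ satisfying $\inf_n |w_n| > 0$. Then $W$ does not lie in the norm closure of $\mathfrak{c}(\mathrm{nil}_2) := \{MN - NM : M, N \in \mathcal{B}(\mathcal{H}),\ M^2 = 0 = N^2\}$. *)

theory Defs
  imports "HOL-Analysis.Analysis"
begin

text \<open>Concrete model of the complex separable (infinite-dimensional) Hilbert space:
  H = l^2(nat, complex), with orthonormal basis e_n = indicator of n (0-indexed).\<close>

type_synonym vec = "nat \<Rightarrow> complex"

definition l2 :: "vec set" where
  "l2 = {x. summable (\<lambda>n. (cmod (x n))\<^sup>2)}"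

definition l2norm :: "vec \<Rightarrow> real" where
  "l2norm x = sqrt (\<Sum>n. (cmod (x n))\<^sup>2)"

text \<open>Bounded (complex-linear) operators on l2; only their action on l2 matters.\<close>
definition bounded_op :: "(vec \<Rightarrow> vec) \<Rightarrow> bool" where
  "bounded_op T \<longleftrightarrow>
     (\<forall>x\<in>l2. T x \<in> l2) \<and>
     (\<forall>x\<in>l2. \<forall>y\<in>l2. T (\<lambda>n. x n + y n) = (\<lambda>n. T x n + T y n)) \<and>
     (\<forall>x\<in>l2. \<forall>c::complex. T (\<lambda>n. c * x n) = (\<lambda>n. c * T x n)) \<and>
     (\<exists>C. \<forall>x\<in>l2. l2norm (T x) \<le> C * l2norm x)"

definition opnorm :: "(vec \<Rightarrow> vec) \<Rightarrow> real" where
  "opnorm T = Sup {l2norm (T x) | x. x \<in> l2 \<and> l2norm x \<le> 1}"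

text \<open>Unilateral forward weighted shift W e_n = w_n e_(n+1).\<close>
definition wshift :: "(nat \<Rightarrow> complex) \<Rightarrow> vec \<Rightarrow> vec" where
  "wshift w x = (\<lambda>n. if n = 0 then 0 else w (n - 1) * x (n - 1))"

definition commutator :: "(vec \<Rightarrow> vec) \<Rightarrow> (vec \<Rightarrow> vec) \<Rightarrow> vec \<Rightarrow> vec" where
  "commutator M N x = (\<lambda>n. M (N x) n - N (M x) n)"

definition square_zero :: "(vec \<Rightarrow> vec) \<Rightarrow> bool" where
  "square_zero M \<longleftrightarrow> (\<forall>x\<in>l2. M (M x) = (\<lambda>n. 0))"

definition in_closure_c_nil2 :: "(vec \<Rightarrow> vec) \<Rightarrow> bool" where
  "in_closure_c_nil2 T \<longleftrightarrow>
     (\<forall>\<epsilon>>0. \<exists>M N. bounded_op M \<and> bounded_op N \<and> square_zero M \<and> square_zero N \<and>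
        opnorm (\<lambda>x n. T x n - commutator M N x n) < \<epsilon>)"

end

theory Submission
  imports Defs
begin

definition fn :: "nat \<Rightarrow> vec \<Rightarrow> real" where
  "fn N x = L2_set (\<lambda>n. cmod (x n)) {..<N}"

lemma l2norm_nonneg: "x \<in> l2 \<Longrightarrow> 0 \<le> l2norm x"
  unfolding l2norm_def l2_def by (simp add: suminf_nonneg)

lemma l2norm_sq: "x \<in> l2 \<Longrightarrow> (l2norm x)\<^sup>2 = (\<Sum>n. (cmod (x n))\<^sup>2)"
  unfolding l2norm_def l2_def by (simp add: suminf_nonneg)

lemma trunc_le: "x \<in> l2 \<Longrightarrow> (\<Sum>n<N. (cmod (x n))\<^sup>2) \<le> (l2norm x)\<^sup>2"
  using l2norm_sq[of x] unfolding l2_def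
  by (auto intro!: sum_le_suminf)

lemma fn_le: "x \<in> l2 \<Longrightarrow> fn N x \<le> l2norm x"
  unfolding fn_def L2_set_def l2norm_def
  by (metis l2norm_def l2norm_sq real_sqrt_le_mono real_sqrt_unique l2norm_nonneg trunc_le)

lemma char:
  assumes "0 \<le> B" "\<And>N. (\<Sum>n<N. (cmod (x n))\<^sup>2) \<le> B\<^sup>2"
  shows "x \<in> l2 \<and> l2norm x \<le> B"
proof -
  have s: "summable (\<lambda>n. (cmod (x n))\<^sup>2)"
  proof (rule bounded_imp_summable[where B="B\<^sup>2"])
    fix n show "0 \<le> (cmod (x n))\<^sup>2" by simp
    show "(\<Sum>k\<le>n. (cmod (x k))\<^sup>2) \<le> B\<^sup>2"
      unfolding lessThan_Suc_atMost[symmetric] by (rule assms(2))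
  qed
  have "(\<Sum>n. (cmod (x n))\<^sup>2) \<le> B\<^sup>2" by (rule suminf_le_const[OF s assms(2)])
  then have "sqrt (\<Sum>n. (cmod (x n))\<^sup>2) \<le> sqrt (B\<^sup>2)" by (rule real_sqrt_le_mono)
  then show ?thesis using s assms(1) unfolding l2_def l2norm_def by simp
qed

lemma char_fn:
  assumes "0 \<le> B" "\<And>N. fn N x \<le> B"
  shows "x \<in> l2 \<and> l2norm x \<le> B"
proof (rule char[OF assms(1)])
  fix N
  have "sqrt (\<Sum>n<N. (cmod (x n))\<^sup>2) \<le> B" using assms(2)[of N] unfolding fn_def L2_set_def .
  then show "(\<Sum>n<N. (cmod (x n))\<^sup>2) \<le> B\<^sup>2"
  proof -
    have "(sqrt (\<Sum>n<N. (cmod (x n))\<^sup>2))\<^sup>2 \<le> B\<^sup>2"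
      by (rule power_mono[OF \<open>sqrt _ \<le> B\<close>]) (simp add: sum_nonneg)
    then show ?thesis by (simp add: sum_nonneg)
  qed
qed

lemma coord: "x \<in> l2 \<Longrightarrow> cmod (x n) \<le> l2norm x"
proof -
  assume x: "x \<in> l2"
  have "(cmod (x n))\<^sup>2 \<le> (\<Sum>m<Suc n. (cmod (x m))\<^sup>2)"
    by (rule member_le_sum) auto
  also have "\<dots> \<le> (l2norm x)\<^sup>2" by (rule trunc_le[OF x])
  finally show ?thesis by (rule power2_le_imp_le[OF _ l2norm_nonneg[OF x]])
qed

lemma l2_zero: "(\<lambda>n. 0) \<in> l2"
  unfolding l2_def by simp

lemma l2norm_zero_imp: "x \<in> l2 \<Longrightarrow> l2norm x = 0 \<Longrightarrow> x = (\<lambda>n. 0)"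
  using coord by fastforce

lemma l2norm_zero: "l2norm (\<lambda>n. 0) = 0"
  unfolding l2norm_def by simp

lemma fn_add: "fn N (\<lambda>n. x n + y n) \<le> fn N x + fn N y"
  unfolding fn_def
  by (rule order.trans[OF L2_set_mono L2_set_triangle_ineq]) (auto simp: norm_triangle_ineq)

lemma fn_sub3: "fn N (\<lambda>n. x n - z n) \<le> fn N (\<lambda>n. x n - y n) + fn N (\<lambda>n. y n - z n)"
proof -
  have "fn N (\<lambda>n. x n - z n) = fn N (\<lambda>n. (x n - y n) + (y n - z n))" by simp
  also have "\<dots> \<le> fn N (\<lambda>n. x n - y n) + fn N (\<lambda>n. y n - z n)" by (rule fn_add)
  finally show ?thesis .
qed

lemma l2_add: assumes "x \<in> l2" "y \<in> l2"
  shows "(\<lambda>n. x n + y n) \<in> l2 \<and> l2norm (\<lambda>n. x n + y n) \<le> l2norm x + l2norm y"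
proof (rule char_fn)
  show "0 \<le> l2norm x + l2norm y" using assms l2norm_nonneg by (simp add: add_nonneg_nonneg)
  fix N show "fn N (\<lambda>n. x n + y n) \<le> l2norm x + l2norm y"
    using fn_add[of N x y] fn_le[OF assms(1), of N] fn_le[OF assms(2), of N] by linarith
qed

lemma l2_scale: assumes "x \<in> l2"
  shows "(\<lambda>n. c * x n) \<in> l2 \<and> l2norm (\<lambda>n. c * x n) = cmod c * l2norm x"
proof -
  have s: "summable (\<lambda>n. (cmod (x n))\<^sup>2)" using assms unfolding l2_def by simp
  have e: "(\<lambda>n. (cmod (c * x n))\<^sup>2) = (\<lambda>n. (cmod c)\<^sup>2 * (cmod (x n))\<^sup>2)"
    by (simp add: norm_mult power_mult_distrib)
  have s2: "summable (\<lambda>n. (cmod (c * x n))\<^sup>2)" unfolding e using s by (rule summable_mult)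
  have "(\<Sum>n. (cmod (c * x n))\<^sup>2) = (cmod c)\<^sup>2 * (\<Sum>n. (cmod (x n))\<^sup>2)"
    unfolding e using s by (rule suminf_mult)
  then show ?thesis using s2 unfolding l2_def l2norm_def by (simp add: real_sqrt_mult)
qed

lemma fn_sub: "fn N (\<lambda>n. x n - y n) \<le> fn N x + fn N y"
  unfolding fn_def
  by (rule order.trans[OF L2_set_mono L2_set_triangle_ineq]) (auto simp: norm_triangle_ineq4)

lemma l2_sub: assumes "x \<in> l2" "y \<in> l2"
  shows "(\<lambda>n. x n - y n) \<in> l2 \<and> l2norm (\<lambda>n. x n - y n) \<le> l2norm x + l2norm y"
proof (rule char_fn)
  show "0 \<le> l2norm x + l2norm y" using assms l2norm_nonneg by (simp add: add_nonneg_nonneg)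
  fix N show "fn N (\<lambda>n. x n - y n) \<le> l2norm x + l2norm y"
    using fn_sub[of N x y] fn_le[OF assms(1), of N] fn_le[OF assms(2), of N] by linarith
qed

lemma l2_revtri: assumes "x \<in> l2" "y \<in> l2"
  shows "l2norm x \<le> l2norm (\<lambda>n. x n - y n) + l2norm y"
proof -
  have "x = (\<lambda>n. (\<lambda>n. x n - y n) n + y n)" by simp
  then show ?thesis using l2_add[OF conjunct1[OF l2_sub[OF assms]] assms(2)] by metis
qed

lemma l2norm_sub_sym: "l2norm (\<lambda>n. x n - y n) = l2norm (\<lambda>n. y n - x n)"
  unfolding l2norm_def by (simp add: norm_minus_commute)

lemma bop_l2: "bounded_op T \<Longrightarrow> x \<in> l2 \<Longrightarrow> T x \<in> l2"
  unfolding bounded_op_def by blast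

lemma bop_add: "bounded_op T \<Longrightarrow> x \<in> l2 \<Longrightarrow> y \<in> l2 \<Longrightarrow> T (\<lambda>n. x n + y n) = (\<lambda>n. T x n + T y n)"
  unfolding bounded_op_def by blast

lemma bop_scale: "bounded_op T \<Longrightarrow> x \<in> l2 \<Longrightarrow> T (\<lambda>n. c * x n) = (\<lambda>n. c * T x n)"
  unfolding bounded_op_def by blast

lemma bop_bound: assumes "bounded_op T" shows "\<exists>C\<ge>0. \<forall>x\<in>l2. l2norm (T x) \<le> C * l2norm x"
proof -
  obtain C where C: "\<forall>x\<in>l2. l2norm (T x) \<le> C * l2norm x" using assms unfolding bounded_op_def by blast
  have "\<forall>x\<in>l2. l2norm (T x) \<le> max C 0 * l2norm x"
  proof
    fix x assume x: "x \<in> l2"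
    have "C * l2norm x \<le> max C 0 * l2norm x" by (rule mult_right_mono) (auto simp: l2norm_nonneg[OF x])
    then show "l2norm (T x) \<le> max C 0 * l2norm x" using C x by fastforce
  qed
  then show ?thesis by (intro exI[of _ "max C 0"]) auto
qed

lemma bop_sub: assumes "bounded_op T" "x \<in> l2" "y \<in> l2"
  shows "T (\<lambda>n. x n - y n) = (\<lambda>n. T x n - T y n)"
proof -
  have d: "(\<lambda>n. x n - y n) \<in> l2" using l2_sub[OF assms(2,3)] by blast
  have "T x = T (\<lambda>n. y n + (\<lambda>n. x n - y n) n)" by simp
  also have "\<dots> = (\<lambda>n. T y n + T (\<lambda>n. x n - y n) n)" by (rule bop_add[OF assms(1,3) d])
  finally show ?thesis by (simp add: fun_eq_iff)
qed

lemma bop_zero: assumes "bounded_op T" shows "T (\<lambda>n. 0) = (\<lambda>n. 0)"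
  using bop_scale[OF assms l2_zero, of 0] by simp

lemma bop_comp: assumes "bounded_op A" "bounded_op B" shows "bounded_op (\<lambda>x. A (B x))"
proof -
  obtain CA where CA: "CA \<ge> 0" "\<forall>x\<in>l2. l2norm (A x) \<le> CA * l2norm x" using bop_bound[OF assms(1)] by blast
  obtain CB where CB: "CB \<ge> 0" "\<forall>x\<in>l2. l2norm (B x) \<le> CB * l2norm x" using bop_bound[OF assms(2)] by blast
  have "\<forall>x\<in>l2. l2norm (A (B x)) \<le> (CA * CB) * l2norm x"
  proof
    fix x assume x: "x \<in> l2"
    have "l2norm (A (B x)) \<le> CA * l2norm (B x)" using CA bop_l2[OF assms(2) x] by blast
    also have "\<dots> \<le> CA * (CB * l2norm x)" using CB x CA(1) by (simp add: mult_left_mono)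
    finally show "l2norm (A (B x)) \<le> (CA * CB) * l2norm x" by simp
  qed
  then show ?thesis unfolding bounded_op_def
    using assms by (auto simp: bop_l2 bop_add bop_scale)
qed

lemma bop_diff: assumes "bounded_op A" "bounded_op B" shows "bounded_op (\<lambda>x n. A x n - B x n)"
proof -
  obtain CA where CA: "CA \<ge> 0" "\<forall>x\<in>l2. l2norm (A x) \<le> CA * l2norm x" using bop_bound[OF assms(1)] by blast
  obtain CB where CB: "CB \<ge> 0" "\<forall>x\<in>l2. l2norm (B x) \<le> CB * l2norm x" using bop_bound[OF assms(2)] by blast
  have "\<forall>x\<in>l2. l2norm (\<lambda>n. A x n - B x n) \<le> (CA + CB) * l2norm x"
  proof
    fix x assume x: "x \<in> l2"
    have "l2norm (\<lambda>n. A x n - B x n) \<le> l2norm (A x) + l2norm (B x)"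
      using l2_sub[OF bop_l2[OF assms(1) x] bop_l2[OF assms(2) x]] by blast
    also have "\<dots> \<le> (CA + CB) * l2norm x" using CA CB x by (simp add: distrib_right add_mono)
    finally show "l2norm (\<lambda>n. A x n - B x n) \<le> (CA + CB) * l2norm x" .
  qed
  moreover have "\<forall>x\<in>l2. (\<lambda>n. A x n - B x n) \<in> l2"
    using l2_sub bop_l2 assms by blast
  moreover have "\<forall>x\<in>l2. \<forall>y\<in>l2. (\<lambda>n. A (\<lambda>n. x n + y n) n - B (\<lambda>n. x n + y n) n)
      = (\<lambda>n. (A x n - B x n) + (A y n - B y n))"
    using assms by (simp add: bop_add algebra_simps)
  moreover have "\<forall>x\<in>l2. \<forall>c. (\<lambda>n. A (\<lambda>n. c * x n) n - B (\<lambda>n. c * x n) n)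
      = (\<lambda>n. c * (A x n - B x n))"
    using assms by (simp add: bop_scale right_diff_distrib)
  ultimately show ?thesis unfolding bounded_op_def by blast
qed

lemma bop_commutator: assumes "bounded_op M" "bounded_op N" shows "bounded_op (commutator M N)"
proof -
  have "commutator M N = (\<lambda>x n. (\<lambda>x. M (N x)) x n - (\<lambda>x. N (M x)) x n)"
    unfolding commutator_def by simp
  then show ?thesis using bop_diff[OF bop_comp[OF assms] bop_comp[OF assms(2,1)]] by simp
qed

lemma complete_l2:
  assumes u: "\<And>j. u j \<in> l2" and q: "0 \<le> q" "q < 1"
    and d: "\<And>j. l2norm (\<lambda>n. u (Suc j) n - u j n) \<le> C * q^j"
  shows "\<exists>v. (\<forall>n. (\<lambda>j. u j n) \<longlonglongrightarrow> v n) \<and>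
     (\<forall>j. (\<lambda>n. v n - u j n) \<in> l2 \<and> l2norm (\<lambda>n. v n - u j n) \<le> C * q^j / (1 - q))"
proof -
  have dl2: "(\<lambda>n. u (Suc j) n - u j n) \<in> l2" for j using l2_sub[OF u u] by blast
  have C0: "0 \<le> C" using d[of 0] l2norm_nonneg[OF dl2[of 0]] by simp
  have pw: "cmod (u (Suc j) n - u j n) \<le> C * q^j" for j n
    using coord[OF dl2[of j], of n] d[of j] by simp
  have sg: "summable (\<lambda>j. C * q^j)" using q by (intro summable_mult summable_geometric) simp
  have sm: "summable (\<lambda>j. u (Suc j) n - u j n)" for n
    by (rule summable_comparison_test[OF _ sg]) (use pw in auto)
  define v where "v n = u 0 n + (\<Sum>j. u (Suc j) n - u j n)" for n
  have conv: "(\<lambda>j. u j n) \<longlonglongrightarrow> v n" for n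
  proof -
    have "(\<lambda>j. u 0 n + (\<Sum>i<j. u (Suc i) n - u i n)) \<longlonglongrightarrow> v n"
      unfolding v_def by (intro tendsto_add tendsto_const summable_LIMSEQ sm)
    moreover have "(\<lambda>j. u 0 n + (\<Sum>i<j. u (Suc i) n - u i n)) = (\<lambda>j. u j n)"
      using sum_lessThan_telescope[of "\<lambda>i. u i n"] by (simp add: fun_eq_iff)
    ultimately show ?thesis by simp
  qed
  have fin: "fn N (\<lambda>n. u (m + j) n - u j n) \<le> C * q^j * (1 - q^m) / (1 - q)" for N m j
  proof (induction m)
    case 0 then show ?case by (simp add: fn_def L2_set_def)
  next
    case (Suc m)
    have "fn N (\<lambda>n. u (Suc m + j) n - u j n) \<le> fn N (\<lambda>n. u (Suc (m + j)) n - u (m + j) n) + fn N (\<lambda>n. u (m + j) n - u j n)"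
      using fn_sub3 by simp
    also have "\<dots> \<le> C * q^(m+j) + C * q^j * (1 - q^m) / (1 - q)"
      using fn_le[OF dl2[of "m+j"], of N] d[of "m+j"] Suc.IH by linarith
    also have "C * q^(m+j) + C * q^j * (1 - q^m) / (1 - q) = C * q^j * (1 - q^Suc m) / (1 - q)"
      using q by (simp add: power_add field_simps)
    finally show ?case .
  qed
  have fin2: "fn N (\<lambda>n. u (m + j) n - u j n) \<le> C * q^j / (1 - q)" for N m j
  proof -
    have "C * q^j * (1 - q^m) \<le> C * q^j * 1"
      using q C0 by (intro mult_left_mono) auto
    then have "C * q^j * (1 - q^m) / (1 - q) \<le> C * q^j / (1 - q)"
      using q by (simp add: divide_right_mono)
    then show ?thesis using fin[of N m j] by linarith
  qed
  have "(\<lambda>n. v n - u j n) \<in> l2 \<and> l2norm (\<lambda>n. v n - u j n) \<le> C * q^j / (1 - q)" for j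
  proof (rule char_fn)
    show "0 \<le> C * q ^ j / (1 - q)" using q C0 by simp
    fix N
    have "(\<lambda>m. fn N (\<lambda>n. u (m + j) n - u j n)) \<longlonglongrightarrow> fn N (\<lambda>n. v n - u j n)"
      unfolding fn_def L2_set_def
      by (intro tendsto_intros LIMSEQ_ignore_initial_segment conv)
    then show "fn N (\<lambda>n. v n - u j n) \<le> C * q ^ j / (1 - q)"
      by (rule LIMSEQ_le_const2) (use fin2 in auto)
  qed
  then show ?thesis using conv by blast
qed

primrec picard :: "(vec \<Rightarrow> vec) \<Rightarrow> vec \<Rightarrow> nat \<Rightarrow> vec" where
  "picard K y 0 = (\<lambda>n. 0)"
| "picard K y (Suc j) = (\<lambda>n. y n + K (picard K y j) n)"

lemma neumann:
  assumes K: "bounded_op K" and q: "0 \<le> q" "q < 1"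
    and Kb: "\<And>z. z \<in> l2 \<Longrightarrow> l2norm (K z) \<le> q * l2norm z"
    and y: "y \<in> l2"
  shows "\<exists>u\<in>l2. \<forall>n. u n - K u n = y n"
proof -
  let ?u = "picard K y"
  have ul2: "?u j \<in> l2" for j
    by (induction j) (auto simp: l2_zero intro!: conjunct1[OF l2_add] y bop_l2[OF K])
  have dd: "l2norm (\<lambda>n. ?u (Suc j) n - ?u j n) \<le> l2norm y * q^j" for j
  proof (induction j)
    case 0 then show ?case by (simp add: bop_zero[OF K])
  next
    case (Suc j)
    have "(\<lambda>n. ?u (Suc (Suc j)) n - ?u (Suc j) n) = (\<lambda>n. K (?u (Suc j)) n - K (?u j) n)"
      by simp
    also have "\<dots> = K (\<lambda>n. ?u (Suc j) n - ?u j n)"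
      by (rule bop_sub[OF K ul2 ul2, symmetric])
    finally have eq: "(\<lambda>n. ?u (Suc (Suc j)) n - ?u (Suc j) n) = K (\<lambda>n. ?u (Suc j) n - ?u j n)" .
    have "l2norm (K (\<lambda>n. ?u (Suc j) n - ?u j n)) \<le> q * l2norm (\<lambda>n. ?u (Suc j) n - ?u j n)"
      by (rule Kb[OF conjunct1[OF l2_sub[OF ul2 ul2]]])
    then have "l2norm (\<lambda>n. ?u (Suc (Suc j)) n - ?u (Suc j) n) \<le> q * l2norm (\<lambda>n. ?u (Suc j) n - ?u j n)"
      unfolding eq .
    also have "\<dots> \<le> q * (l2norm y * q^j)" using Suc.IH q by (simp add: mult_left_mono)
    finally show ?case by (simp add: algebra_simps)
  qed
  obtain v where conv: "\<And>n. (\<lambda>j. ?u j n) \<longlonglongrightarrow> v n"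
    and tl: "\<And>j. (\<lambda>n. v n - ?u j n) \<in> l2 \<and> l2norm (\<lambda>n. v n - ?u j n) \<le> l2norm y * q^j / (1 - q)"
    using complete_l2[OF ul2 q dd] by blast
  have vl2: "v \<in> l2" using tl[of 0] by simp
  have "v n - K v n = y n" for n
  proof -
    have "(\<lambda>j. K (?u j) n - K v n) \<longlonglongrightarrow> 0"
    proof (rule Lim_null_comparison)
      show "\<forall>\<^sub>F j in sequentially. norm (K (?u j) n - K v n) \<le> q * (l2norm y * q^j / (1 - q))"
      proof (intro always_eventually allI)
        fix j
        have "K (\<lambda>n. v n - ?u j n) = (\<lambda>n. K v n - K (?u j) n)" by (rule bop_sub[OF K vl2 ul2])
        then have "norm (K (?u j) n - K v n) = cmod (K (\<lambda>n. v n - ?u j n) n)"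
          by (simp add: norm_minus_commute)
        also have "\<dots> \<le> l2norm (K (\<lambda>n. v n - ?u j n))" using coord bop_l2[OF K] tl by blast
        also have "\<dots> \<le> q * l2norm (\<lambda>n. v n - ?u j n)" using Kb tl by blast
        also have "\<dots> \<le> q * (l2norm y * q^j / (1 - q))" using tl[of j] q by (intro mult_left_mono) auto
        finally show "norm (K (?u j) n - K v n) \<le> q * (l2norm y * q^j / (1 - q))" .
      qed
      show "(\<lambda>j. q * (l2norm y * q^j / (1 - q))) \<longlonglongrightarrow> 0"
        using q by (intro tendsto_mult_right_zero tendsto_divide_zero tendsto_mult_left_zero LIMSEQ_power_zero) simp
    qed
    then have kc: "(\<lambda>j. K (?u j) n) \<longlonglongrightarrow> K v n" by (rule LIM_zero_cancel)
    have "(\<lambda>j. ?u (Suc j) n) \<longlonglongrightarrow> y n + K v n" using kc by (simp add: tendsto_add)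
    moreover have "(\<lambda>j. ?u (Suc j) n) \<longlonglongrightarrow> v n" using conv by (rule LIMSEQ_Suc)
    ultimately have "v n = y n + K v n" using LIMSEQ_unique by blast
    then show ?thesis by simp
  qed
  then show ?thesis using vl2 by blast
qed

lemma anti_M: assumes M: "bounded_op M" and N: "bounded_op N" and sM: "square_zero M" and x: "x \<in> l2"
  shows "M (commutator M N x) = (\<lambda>n. - commutator M N (M x) n)"
proof -
  have Nx: "N x \<in> l2" and Mx: "M x \<in> l2" using bop_l2 M N x by auto
  have "M (commutator M N x) = (\<lambda>n. M (M (N x)) n - M (N (M x)) n)"
    unfolding commutator_def by (rule bop_sub[OF M bop_l2[OF M Nx] bop_l2[OF N Mx]])
  also have "\<dots> = (\<lambda>n. - M (N (M x)) n)" using sM Nx unfolding square_zero_def by simp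
  also have "\<dots> = (\<lambda>n. - commutator M N (M x) n)"
    using sM x bop_zero[OF N] unfolding square_zero_def commutator_def by simp
  finally show ?thesis .
qed

lemma anti_N: assumes M: "bounded_op M" and N: "bounded_op N" and sN: "square_zero N" and x: "x \<in> l2"
  shows "N (commutator M N x) = (\<lambda>n. - commutator M N (N x) n)"
proof -
  have Nx: "N x \<in> l2" and Mx: "M x \<in> l2" using bop_l2 M N x by auto
  have "N (commutator M N x) = (\<lambda>n. N (M (N x)) n - N (N (M x)) n)"
    unfolding commutator_def by (rule bop_sub[OF N bop_l2[OF M Nx] bop_l2[OF N Mx]])
  also have "\<dots> = (\<lambda>n. N (M (N x)) n)" using sN Mx unfolding square_zero_def by simp
  also have "\<dots> = (\<lambda>n. - commutator M N (N x) n)"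
    using sN x bop_zero[OF M] unfolding square_zero_def commutator_def by simp
  finally show ?thesis .
qed

lemma range_in:
  assumes T: "bounded_op T" and P: "bounded_op P" and sP: "square_zero P"
    and anti: "\<And>x. x \<in> l2 \<Longrightarrow> P (T x) = (\<lambda>n. - T (P x) n)"
    and e: "e \<in> l2"
    and dec: "\<forall>y\<in>l2. \<exists>x\<in>l2. \<exists>t. y = (\<lambda>n. T x n + t * e n)"
    and notin: "\<forall>x\<in>l2. T x \<noteq> e"
    and y: "y \<in> l2"
  shows "\<exists>z\<in>l2. P y = T z"
proof -
  have Pe: "P e \<in> l2" using bop_l2[OF P e] .
  obtain r a where r: "r \<in> l2" and Pe_eq: "P e = (\<lambda>n. T r n + a * e n)" using dec Pe by blast
  have Tr: "T r \<in> l2" using bop_l2[OF T r] .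
  have ae: "(\<lambda>n. a * e n) \<in> l2" using l2_scale[OF e] by blast
  have Pr: "P r \<in> l2" using bop_l2[OF P r] .
  have ar: "(\<lambda>n. a * r n) \<in> l2" using l2_scale[OF r] by blast
  have "(\<lambda>n. 0) = P (P e)" using sP e unfolding square_zero_def by simp
  also have "\<dots> = (\<lambda>n. P (T r) n + P (\<lambda>n. a * e n) n)" unfolding Pe_eq by (rule bop_add[OF P Tr ae])
  also have "\<dots> = (\<lambda>n. - T (P r) n + a * (T r n + a * e n))"
    using anti[OF r] bop_scale[OF P e, of a] Pe_eq by simp
  finally have z: "\<And>n. a * a * e n = T (P r) n - a * T r n"
    by (simp add: fun_eq_iff algebra_simps)
  have TPr: "T (\<lambda>n. P r n - a * r n) = (\<lambda>n. T (P r) n - a * T r n)"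
    using bop_sub[OF T Pr ar] bop_scale[OF T r, of a] by simp
  have a0: "a = 0"
  proof (rule ccontr)
    assume a: "a \<noteq> 0"
    let ?z = "\<lambda>m. (1 / (a * a)) * (P r m - a * r m)"
    have zl2: "?z \<in> l2" using l2_scale l2_sub[OF Pr ar] by blast
    have "T ?z = (\<lambda>n. (1 / (a * a)) * (T (P r) n - a * T r n))"
      using bop_scale[OF T conjunct1[OF l2_sub[OF Pr ar]], of "1 / (a * a)"] TPr by simp
    also have "\<dots> = e" using a by (simp add: fun_eq_iff z[symmetric])
    finally show False using notin zl2 by blast
  qed
  have PeT: "P e = T r" using Pe_eq a0 by simp
  obtain x t where x: "x \<in> l2" and yx: "y = (\<lambda>n. T x n + t * e n)" using dec y by blast
  have Tx: "T x \<in> l2" using bop_l2[OF T x] .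
  have te: "(\<lambda>n. t * e n) \<in> l2" using l2_scale[OF e] by blast
  have Px: "P x \<in> l2" using bop_l2[OF P x] .
  have tr: "(\<lambda>n. t * r n) \<in> l2" using l2_scale[OF r] by blast
  have "P y = (\<lambda>n. P (T x) n + P (\<lambda>n. t * e n) n)" unfolding yx by (rule bop_add[OF P Tx te])
  also have "\<dots> = (\<lambda>n. t * T r n - T (P x) n)"
    using anti[OF x] bop_scale[OF P e, of t] PeT by simp
  also have "\<dots> = T (\<lambda>n. t * r n - P x n)"
    using bop_sub[OF T tr Px] bop_scale[OF T r, of t] by simp
  finally show ?thesis using l2_sub[OF tr Px] by blast
qed

lemma key:
  assumes M: "bounded_op M" and N: "bounded_op N" and sM: "square_zero M" and sN: "square_zero N"
    and e: "e \<in> l2"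
    and inj: "\<forall>x\<in>l2. commutator M N x = (\<lambda>n. 0) \<longrightarrow> x = (\<lambda>n. 0)"
    and dec: "\<forall>y\<in>l2. \<exists>x\<in>l2. \<exists>t. y = (\<lambda>n. commutator M N x n + t * e n)"
    and notin: "\<forall>x\<in>l2. commutator M N x \<noteq> e"
  shows False
proof -
  let ?T = "commutator M N"
  have T: "bounded_op ?T" by (rule bop_commutator[OF M N])
  have RM: "\<And>y. y \<in> l2 \<Longrightarrow> \<exists>z\<in>l2. M y = ?T z"
    by (rule range_in[OF T M sM anti_M[OF M N sM] e dec notin])
  have RN: "\<And>y. y \<in> l2 \<Longrightarrow> \<exists>z\<in>l2. N y = ?T z"
    by (rule range_in[OF T N sN anti_N[OF M N sN] e dec notin])
  obtain a where a: "a \<in> l2" "N e = ?T a" using RN[OF e] by blast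
  obtain b where b: "b \<in> l2" "M e = ?T b" using RM[OF e] by blast
  have Ma: "M a \<in> l2" using bop_l2[OF M a(1)] .
  have Nb: "N b \<in> l2" using bop_l2[OF N b(1)] .
  have zl2: "(\<lambda>n. N b n - M a n) \<in> l2" using l2_sub[OF Nb Ma] by blast
  have "?T e = (\<lambda>n. M (N e) n - N (M e) n)" unfolding commutator_def by simp
  also have "\<dots> = (\<lambda>n. ?T (N b) n - ?T (M a) n)"
    using anti_M[OF M N sM a(1)] anti_N[OF M N sN b(1)] a b by simp
  also have "\<dots> = ?T (\<lambda>n. N b n - M a n)" by (rule bop_sub[OF T Nb Ma, symmetric])
  finally have eq: "?T e = ?T (\<lambda>n. N b n - M a n)" .
  have "?T (\<lambda>n. e n - (N b n - M a n)) = (\<lambda>n. 0)"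
    using bop_sub[OF T e zl2] eq by simp
  then have "(\<lambda>n. e n - (N b n - M a n)) = (\<lambda>n. 0)" using inj l2_sub[OF e zl2] by blast
  then have ez: "e = (\<lambda>n. N b n - M a n)" by (simp add: fun_eq_iff)
  obtain p where p: "p \<in> l2" "M a = ?T p" using RM[OF a(1)] by blast
  obtain p' where p': "p' \<in> l2" "N b = ?T p'" using RN[OF b(1)] by blast
  have "?T (\<lambda>n. p' n - p n) = e" unfolding ez bop_sub[OF T p'(1) p(1)] p(2) p'(2) ..
  then show False using notin l2_sub[OF p'(1) p(1)] by blast
qed

lemma wshift_sum: "(\<Sum>n<Suc N. (cmod (wshift w x n))\<^sup>2) = (\<Sum>n<N. (cmod (w n))\<^sup>2 * (cmod (x n))\<^sup>2)"
  unfolding sum.lessThan_Suc_shift by (simp add: wshift_def norm_mult power_mult_distrib)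

lemma wshift_bop: assumes B: "\<And>n. cmod (w n) \<le> B" shows "bounded_op (wshift w)"
proof -
  have B0: "0 \<le> B" using B[of 0] norm_ge_zero order.trans by blast
  have nb: "wshift w x \<in> l2 \<and> l2norm (wshift w x) \<le> B * l2norm x" if x: "x \<in> l2" for x
  proof (rule char)
    show "0 \<le> B * l2norm x" using B0 l2norm_nonneg[OF x] by simp
    fix N
    have "(\<Sum>n<N. (cmod (wshift w x n))\<^sup>2) \<le> (\<Sum>n<Suc N. (cmod (wshift w x n))\<^sup>2)"
      by (rule sum_mono2) auto
    also have "\<dots> = (\<Sum>n<N. (cmod (w n))\<^sup>2 * (cmod (x n))\<^sup>2)" by (rule wshift_sum)
    also have "\<dots> \<le> (\<Sum>n<N. B\<^sup>2 * (cmod (x n))\<^sup>2)"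
      by (intro sum_mono mult_right_mono power_mono B) auto
    also have "\<dots> = B\<^sup>2 * (\<Sum>n<N. (cmod (x n))\<^sup>2)" by (simp add: sum_distrib_left)
    also have "\<dots> \<le> B\<^sup>2 * (l2norm x)\<^sup>2" by (intro mult_left_mono trunc_le x) simp
    finally show "(\<Sum>n<N. (cmod (wshift w x n))\<^sup>2) \<le> (B * l2norm x)\<^sup>2" by (simp add: power_mult_distrib)
  qed
  show ?thesis unfolding bounded_op_def
    using nb by (auto simp: wshift_def fun_eq_iff algebra_simps)
qed

lemma wshift_below: assumes d: "\<And>n. \<delta> \<le> cmod (w n)" "0 < \<delta>" and x: "x \<in> l2"
  and Wx: "wshift w x \<in> l2"
  shows "\<delta> * l2norm x \<le> l2norm (wshift w x)"
proof -
  have "x \<in> l2 \<and> l2norm x \<le> l2norm (wshift w x) / \<delta>"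
  proof (rule char)
    show "0 \<le> l2norm (wshift w x) / \<delta>" using l2norm_nonneg[OF Wx] d by simp
    fix N
    have "(\<Sum>n<N. (cmod (x n))\<^sup>2) = (\<Sum>n<N. \<delta>\<^sup>2 * (cmod (x n))\<^sup>2) / \<delta>\<^sup>2"
      using d by (simp add: sum_distrib_left[symmetric])
    also have "\<dots> \<le> (\<Sum>n<N. (cmod (w n))\<^sup>2 * (cmod (x n))\<^sup>2) / \<delta>\<^sup>2"
      by (intro divide_right_mono sum_mono mult_right_mono power_mono d) (use d in auto)
    also have "\<dots> = (\<Sum>n<Suc N. (cmod (wshift w x n))\<^sup>2) / \<delta>\<^sup>2" by (subst wshift_sum) (rule refl)
    also have "\<dots> \<le> (l2norm (wshift w x))\<^sup>2 / \<delta>\<^sup>2" by (intro divide_right_mono trunc_le Wx) simp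
    finally show "(\<Sum>n<N. (cmod (x n))\<^sup>2) \<le> (l2norm (wshift w x) / \<delta>)\<^sup>2" by (simp add: power_divide)
  qed
  then show ?thesis using d by (simp add: field_simps)
qed

definition linv :: "(nat \<Rightarrow> complex) \<Rightarrow> vec \<Rightarrow> vec" where
  "linv w z = (\<lambda>n. z (Suc n) / w n)"

lemma linv_bop: assumes d: "\<And>n. \<delta> \<le> cmod (w n)" "0 < \<delta>"
  shows "bounded_op (linv w)" and "\<And>z. z \<in> l2 \<Longrightarrow> l2norm (linv w z) \<le> l2norm z / \<delta>"
proof -
  have wnz: "w n \<noteq> 0" for n using d(1)[of n] d(2) by auto
  have nb: "linv w z \<in> l2 \<and> l2norm (linv w z) \<le> l2norm z / \<delta>" if z: "z \<in> l2" for z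
  proof (rule char)
    show "0 \<le> l2norm z / \<delta>" using l2norm_nonneg[OF z] d by simp
    fix N
    have "(\<Sum>n<N. (cmod (linv w z n))\<^sup>2) = (\<Sum>n<N. (cmod (z (Suc n)))\<^sup>2 / (cmod (w n))\<^sup>2)"
      by (simp add: linv_def norm_divide power_divide)
    also have "\<dots> \<le> (\<Sum>n<N. (cmod (z (Suc n)))\<^sup>2 / \<delta>\<^sup>2)"
      by (intro sum_mono divide_left_mono power_mono d mult_pos_pos) (use d wnz in auto)
    also have "\<dots> \<le> (\<Sum>n<Suc N. (cmod (z n))\<^sup>2) / \<delta>\<^sup>2"
      unfolding sum.lessThan_Suc_shift sum_divide_distrib[symmetric] by (intro divide_right_mono) auto
    also have "\<dots> \<le> (l2norm z)\<^sup>2 / \<delta>\<^sup>2" by (intro divide_right_mono trunc_le z) simp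
    finally show "(\<Sum>n<N. (cmod (linv w z n))\<^sup>2) \<le> (l2norm z / \<delta>)\<^sup>2" by (simp add: power_divide)
  qed
  show "bounded_op (linv w)" unfolding bounded_op_def
  proof (intro conjI)
    show "\<exists>C. \<forall>x\<in>l2. l2norm (linv w x) \<le> C * l2norm x"
      using nb by (intro exI[of _ "1/\<delta>"]) auto
  qed (use nb in \<open>auto simp: linv_def fun_eq_iff add_divide_distrib\<close>)
  show "\<And>z. z \<in> l2 \<Longrightarrow> l2norm (linv w z) \<le> l2norm z / \<delta>" using nb by blast
qed

lemma wshift_linv: assumes "\<And>n. w n \<noteq> 0" shows "wshift w (linv w z) = (\<lambda>n. if n = 0 then 0 else z n)"
  using assms by (auto simp: wshift_def linv_def fun_eq_iff)

theorem proposition4p20: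
  fixes w :: "nat \<Rightarrow> complex"
  assumes "bdd_above (range (\<lambda>n. cmod (w n)))"
    and "(INF n. cmod (w n)) > 0"
  shows "\<not> in_closure_c_nil2 (wshift w)"
proof
  assume cl: "in_closure_c_nil2 (wshift w)"
  obtain B where B: "\<And>n. cmod (w n) \<le> B" using assms(1) by (auto simp: bdd_above_def)
  define \<delta> where "\<delta> = (INF n. cmod (w n))"
  have d0: "0 < \<delta>" using assms(2) \<delta>_def by simp
  have dl: "\<delta> \<le> cmod (w n)" for n unfolding \<delta>_def
    by (rule cINF_lower) (auto intro: bdd_belowI[where m=0])
  have wnz: "w n \<noteq> 0" for n using dl[of n] d0 by auto
  define \<epsilon> where "\<epsilon> = \<delta> / 3"
  have e0: "0 < \<epsilon>" using d0 \<epsilon>_def by simp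
  obtain M N where M: "bounded_op M" and N: "bounded_op N" and sM: "square_zero M" and sN: "square_zero N"
    and on: "opnorm (\<lambda>x n. wshift w x n - commutator M N x n) < \<epsilon>"
    using cl e0 unfolding in_closure_c_nil2_def by blast
  define T where "T = commutator M N"
  define D where "D = (\<lambda>x n. wshift w x n - commutator M N x n)"
  have W: "bounded_op (wshift w)" by (rule wshift_bop[OF B])
  have T: "bounded_op T" unfolding T_def by (rule bop_commutator[OF M N])
  have D: "bounded_op D" unfolding D_def T_def[symmetric] by (rule bop_diff[OF W T])
  obtain CD where CD: "CD \<ge> 0" "\<forall>x\<in>l2. l2norm (D x) \<le> CD * l2norm x" using bop_bound[OF D] by blast
  let ?S = "{l2norm (D x) | x. x \<in> l2 \<and> l2norm x \<le> 1}"
  have bS: "bdd_above ?S"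
  proof (rule bdd_aboveI[where M=CD])
    fix s assume "s \<in> ?S"
    then obtain x where x: "x \<in> l2" "l2norm x \<le> 1" "s = l2norm (D x)" by blast
    have "CD * l2norm x \<le> CD * 1" using CD(1) x(2) by (intro mult_left_mono)
    then show "s \<le> CD" using CD(2) x by fastforce
  qed
  have on1: "l2norm (D x) \<le> opnorm D" if "x \<in> l2" "l2norm x \<le> 1" for x
    unfolding opnorm_def by (rule cSup_upper[OF _ bS]) (use that in blast)
  have Db: "l2norm (D x) \<le> \<epsilon> * l2norm x" if x: "x \<in> l2" for x
  proof (cases "l2norm x = 0")
    case True
    then have "x = (\<lambda>n. 0)" using l2norm_zero_imp x by blast
    then show ?thesis using bop_zero[OF D] l2norm_zero True by simp
  next
    case False
    define r where "r = l2norm x"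
    have r0: "0 < r" using False l2norm_nonneg[OF x] r_def by simp
    let ?x' = "\<lambda>n. complex_of_real (1 / r) * x n"
    have c: "cmod (complex_of_real (1 / r)) = 1 / r" using r0 by (simp only: norm_of_real) simp
    have x': "?x' \<in> l2" "l2norm ?x' = 1"
      using l2_scale[OF x, of "complex_of_real (1 / r)"] r0 r_def unfolding c by auto
    have "D ?x' = (\<lambda>n. complex_of_real (1 / r) * D x n)" by (rule bop_scale[OF D x])
    then have "l2norm (D ?x') = (1 / r) * l2norm (D x)"
      using l2_scale[OF bop_l2[OF D x], of "complex_of_real (1 / r)"] unfolding c by simp
    then have "(1 / r) * l2norm (D x) < \<epsilon>" using on1[OF x'(1)] x'(2) on unfolding D_def by simp
    then show ?thesis using r0 r_def by (simp add: field_simps)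
  qed
  have TD: "wshift w x = (\<lambda>n. T x n + D x n)" for x unfolding D_def T_def by simp
  have Tb: "(\<delta> - \<epsilon>) * l2norm x \<le> l2norm (T x)" if x: "x \<in> l2" for x
  proof -
    have "\<delta> * l2norm x \<le> l2norm (wshift w x)" by (rule wshift_below[OF dl d0 x bop_l2[OF W x]])
    also have "\<dots> \<le> l2norm (T x) + l2norm (D x)"
      unfolding TD using l2_add[OF bop_l2[OF T x] bop_l2[OF D x]] by blast
    finally show ?thesis using Db[OF x] by (simp add: left_diff_distrib)
  qed
  define e where "e = (\<lambda>n::nat. if n = 0 then (1::complex) else 0)"
  have el2: "e \<in> l2 \<and> l2norm e \<le> 1"
  proof (rule char)
    fix N
    have "(\<Sum>n<N. (cmod (e n))\<^sup>2) = (\<Sum>n<N. if n = 0 then 1 else 0)"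
      unfolding e_def by (intro sum.cong) auto
    also have "\<dots> \<le> 1" by (simp add: sum.delta)
    finally show "(\<Sum>n<N. (cmod (e n))\<^sup>2) \<le> 1\<^sup>2" by simp
  qed simp
  have inj: "\<forall>x\<in>l2. T x = (\<lambda>n. 0) \<longrightarrow> x = (\<lambda>n. 0)"
  proof (intro ballI impI)
    fix x assume x: "x \<in> l2" and "T x = (\<lambda>n. 0)"
    then have "(\<delta> - \<epsilon>) * l2norm x \<le> 0" using Tb[OF x] l2norm_zero by simp
    moreover have "0 < \<delta> - \<epsilon>" using d0 \<epsilon>_def by simp
    ultimately have "l2norm x = 0" using l2norm_nonneg[OF x]
      by (simp add: mult_le_0_iff)
    then show "x = (\<lambda>n. 0)" using l2norm_zero_imp x by blast
  qed
  have notin: "\<forall>x\<in>l2. T x \<noteq> e"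
  proof (intro ballI notI)
    fix x assume x: "x \<in> l2" and Te: "T x = e"
    have "D x 0 = -1" unfolding D_def T_def[symmetric] Te by (simp add: wshift_def e_def)
    then have "1 \<le> l2norm (D x)" using coord[OF bop_l2[OF D x], of 0] by simp
    then have h1: "1 \<le> \<epsilon> * l2norm x" using Db[OF x] by linarith
    have h2: "(\<delta> - \<epsilon>) * l2norm x \<le> 1" using Tb[OF x] Te el2 by simp
    have "\<delta> - \<epsilon> = 2 * \<epsilon>" using \<epsilon>_def by simp
    then have "2 * (\<epsilon> * l2norm x) \<le> 1" using h2 by (simp add: mult.assoc)
    then show False using h1 by linarith
  qed
  have dec: "\<forall>y\<in>l2. \<exists>x\<in>l2. \<exists>t. y = (\<lambda>n. T x n + t * e n)"
  proof
    fix y assume y: "y \<in> l2"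
    let ?K = "\<lambda>z. D (linv w z)"
    have K: "bounded_op ?K" by (rule bop_comp[OF D linv_bop(1)[where \<delta>=\<delta> and w=w, OF dl d0]])
    have Kb: "l2norm (?K z) \<le> (1/3) * l2norm z" if z: "z \<in> l2" for z
    proof -
      have "l2norm (?K z) \<le> \<epsilon> * l2norm (linv w z)" by (rule Db[OF bop_l2[OF linv_bop(1)[where \<delta>=\<delta> and w=w, OF dl d0] z]])
      also have "\<dots> \<le> \<epsilon> * (l2norm z / \<delta>)"
        using linv_bop(2)[where \<delta>=\<delta> and w=w, OF dl d0 z] e0 by (intro mult_left_mono) auto
      also have "\<dots> = (1/3) * l2norm z" unfolding \<epsilon>_def using d0 by (simp add: field_simps)
      finally show ?thesis .
    qed
    obtain u where u: "u \<in> l2" "\<And>n. u n - ?K u n = y n"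
      using neumann[OF K _ _ Kb y] by auto
    have "y = (\<lambda>n. T (linv w u) n + u 0 * e n)"
    proof
      fix n
      have "T (linv w u) n = wshift w (linv w u) n - ?K u n" using TD[of "linv w u"] by (simp add: fun_eq_iff)
      then show "y n = T (linv w u) n + u 0 * e n"
        using u(2)[of n] wshift_linv[of w u, OF wnz] by (cases "n = 0") (simp_all add: e_def)
    qed
    then show "\<exists>x\<in>l2. \<exists>t. y = (\<lambda>n. T x n + t * e n)"
      using bop_l2[OF linv_bop(1)[where \<delta>=\<delta> and w=w, OF dl d0] u(1)] by blast
  qed
  show False
    by (rule key[OF M N sM sN conjunct1[OF el2]]) (use inj dec notin in \<open>simp_all add: T_def\<close>)
qed

end
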